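(* Let $\Gamma$ be a Veldkamp $n$-gon ($n\ge2$) and let $(x_0,x_1,\dots,x_n)$ and $(y_0,y_1,\dots,y_n)$ be two roots with $x_0=y_0$ and $x_n=y_n$. Then $x_1$ and $y_1$ are opposite at $x_0$ (i.e. $x_1\equiv_{x_0}y_1$) if and only if $x_{n-1}$ and $y_{n-1}$ are opposite at $x_n$.
   Context: A graph is a pair $(V,E)$ with $E$ a set of $2$-element subsets of $V$; $\Gamma_v$ is the set of neighbors of $v$. An $s$-path is a sequence $(x_0,\dots,x_s)$ of vertices with consecutive vertices adjacent and $x_{i-2}\ne x_i$ for $i\in[2,s]$. A closed $s$-path is an $s$-path with $s\ge 3$ whose first and last vertices coincide; an $s$-circuit is the subgraph determined by a closed $s$-path. An opposition relation on a set $X$ is a symmetric anti-reflexive relation; it is $k$-plump if for every $S\subseteq X$ with $|S|\le k$ some element of $X$ is opposite all elements of $S$. A Veldkamp graph is a graph with a $2$-plump opposition relation $\equiv_v$ on $\Gamma_v$ for each vertex $v$. A path $(v_0,\dots,v_s)$ is straight if $v_{i-1}\equiv_{v_i}v_{i+1}$ for all $i\in[1,s-1]$; a circuit is straight if every path in it is straight. A Veldkamp $n$-gon ($n\ge2$) is a Veldkamp graph satisfying (VP1) connected and bipartite; (VP2) for each $k\in[1,n-1]$ each straight $k$-path is the unique straight path between its endpoints of length at most $k$; (VP3) every straight $(n+1)$-path lies in a straight $2n$-circuit. A root is a straight $n$-path. *)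

theory Defs
  imports Main
begin

text \<open>A graph is given by a vertex set V and an adjacency relation adj
 (edges are the 2-element sets {x,y} with adj x y). opp v x y means x and y
 are opposite at v.\<close>

definition graph :: "'a set \<Rightarrow> ('a \<Rightarrow> 'a \<Rightarrow> bool) \<Rightarrow> bool" where
  "graph V adj \<longleftrightarrow> (\<forall>x y. adj x y \<longrightarrow> x \<in> V \<and> y \<in> V \<and> x \<noteq> y \<and> adj y x)"

definition nbrs :: "('a \<Rightarrow> 'a \<Rightarrow> bool) \<Rightarrow> 'a \<Rightarrow> 'a set" where
  "nbrs adj v = {w. adj v w}"

definition opposition_rel :: "'b set \<Rightarrow> ('b \<Rightarrow> 'b \<Rightarrow> bool) \<Rightarrow> bool" where
  "opposition_rel X R \<longleftrightarrow> (\<forall>x y. R x y \<longrightarrow> x \<in> X \<and> y \<in> X) \<and>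
     (\<forall>x y. R x y \<longrightarrow> R y x) \<and> (\<forall>x. \<not> R x x)"

definition plump :: "nat \<Rightarrow> 'b set \<Rightarrow> ('b \<Rightarrow> 'b \<Rightarrow> bool) \<Rightarrow> bool" where
  "plump k X R \<longleftrightarrow> (\<forall>S. S \<subseteq> X \<and> finite S \<and> card S \<le> k \<longrightarrow> (\<exists>z\<in>X. \<forall>s\<in>S. R z s))"

definition veldkamp_graph :: "'a set \<Rightarrow> ('a \<Rightarrow> 'a \<Rightarrow> bool) \<Rightarrow> ('a \<Rightarrow> 'a \<Rightarrow> 'a \<Rightarrow> bool) \<Rightarrow> bool" where
  "veldkamp_graph V adj opp \<longleftrightarrow> graph V adj \<and>
     (\<forall>v\<in>V. opposition_rel (nbrs adj v) (opp v) \<and> plump 2 (nbrs adj v) (opp v))"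

definition is_path :: "'a set \<Rightarrow> ('a \<Rightarrow> 'a \<Rightarrow> bool) \<Rightarrow> 'a list \<Rightarrow> bool" where
  "is_path V adj p \<longleftrightarrow> p \<noteq> [] \<and> set p \<subseteq> V \<and>
     (\<forall>i. Suc i < length p \<longrightarrow> adj (p ! i) (p ! Suc i)) \<and>
     (\<forall>i. i + 2 < length p \<longrightarrow> p ! i \<noteq> p ! (i + 2))"

definition s_path :: "'a set \<Rightarrow> ('a \<Rightarrow> 'a \<Rightarrow> bool) \<Rightarrow> nat \<Rightarrow> 'a list \<Rightarrow> bool" where
  "s_path V adj s p \<longleftrightarrow> is_path V adj p \<and> length p = s + 1"

definition closed_s_path :: "'a set \<Rightarrow> ('a \<Rightarrow> 'a \<Rightarrow> bool) \<Rightarrow> nat \<Rightarrow> 'a list \<Rightarrow> bool" where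
  "closed_s_path V adj s p \<longleftrightarrow> s_path V adj s p \<and> s \<ge> 3 \<and> hd p = last p"

definition straight :: "('a \<Rightarrow> 'a \<Rightarrow> 'a \<Rightarrow> bool) \<Rightarrow> 'a list \<Rightarrow> bool" where
  "straight opp p \<longleftrightarrow> (\<forall>i. 0 < i \<and> i + 1 < length p \<longrightarrow> opp (p ! i) (p ! (i - 1)) (p ! (i + 1)))"

text \<open>The subgraph (circuit) determined by a closed path c: vertex set set c,
 adjacency circ_adj c.\<close>
definition circ_adj :: "'a list \<Rightarrow> 'a \<Rightarrow> 'a \<Rightarrow> bool" where
  "circ_adj c x y \<longleftrightarrow> (\<exists>i. Suc i < length c \<and> {x, y} = {c ! i, c ! Suc i})"

definition straight_circuit :: "('a \<Rightarrow> 'a \<Rightarrow> 'a \<Rightarrow> bool) \<Rightarrow> 'a list \<Rightarrow> bool" where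
  "straight_circuit opp c \<longleftrightarrow> (\<forall>p. is_path (set c) (circ_adj c) p \<longrightarrow> straight opp p)"

definition lies_in :: "'a list \<Rightarrow> 'a list \<Rightarrow> bool" where
  "lies_in p c \<longleftrightarrow> set p \<subseteq> set c \<and> (\<forall>i. Suc i < length p \<longrightarrow> circ_adj c (p ! i) (p ! Suc i))"

definition veldkamp_ngon :: "'a set \<Rightarrow> ('a \<Rightarrow> 'a \<Rightarrow> bool) \<Rightarrow> ('a \<Rightarrow> 'a \<Rightarrow> 'a \<Rightarrow> bool) \<Rightarrow> nat \<Rightarrow> bool" where
  "veldkamp_ngon V adj opp n \<longleftrightarrow> n \<ge> 2 \<and> veldkamp_graph V adj opp \<and>
    \<comment> \<open>VP1\<close>
    (\<forall>x\<in>V. \<forall>y\<in>V. adj\<^sup>*\<^sup>* x y) \<and>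
    (\<exists>A. A \<subseteq> V \<and> (\<forall>x y. adj x y \<longrightarrow> (x \<in> A \<longleftrightarrow> y \<notin> A))) \<and>
    \<comment> \<open>VP2\<close>
    (\<forall>k p q. 1 \<le> k \<and> k \<le> n - 1 \<and> s_path V adj k p \<and> straight opp p \<and>
        is_path V adj q \<and> straight opp q \<and> length q \<le> k + 1 \<and>
        hd q = hd p \<and> last q = last p \<longrightarrow> q = p) \<and>
    \<comment> \<open>VP3\<close>
    (\<forall>p. s_path V adj (n + 1) p \<and> straight opp p \<longrightarrow>
        (\<exists>c. closed_s_path V adj (2 * n) c \<and> straight_circuit opp c \<and> lies_in p c))"

definition root :: "'a set \<Rightarrow> ('a \<Rightarrow> 'a \<Rightarrow> bool) \<Rightarrow> ('a \<Rightarrow> 'a \<Rightarrow> 'a \<Rightarrow> bool) \<Rightarrow> nat \<Rightarrow> 'a list \<Rightarrow> bool" where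
  "root V adj opp n p \<longleftrightarrow> s_path V adj n p \<and> straight opp p"

end

theory Submission
  imports Defs
begin


lemma is_path_take:
  assumes "is_path V adj w" "0 < k"
  shows "is_path V adj (take k w)"
  using assms unfolding is_path_def
  by (auto simp: nth_take dest: in_set_takeD)

lemma is_path_drop:
  assumes "is_path V adj w" "k < length w"
  shows "is_path V adj (drop k w)"
proof -
  have "set (drop k w) \<subseteq> V" using assms set_drop_subset[of k w] unfolding is_path_def by blast
  moreover have "\<forall>i. Suc i < length (drop k w) \<longrightarrow> adj (drop k w ! i) (drop k w ! Suc i)"
  proof (intro allI impI)
    fix i assume "Suc i < length (drop k w)"
    then have "Suc (k+i) < length w" by simp
    then have "adj (w ! (k+i)) (w ! Suc (k+i))" using assms unfolding is_path_def by blast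
    then show "adj (drop k w ! i) (drop k w ! Suc i)" using assms by simp
  qed
  moreover have "\<forall>i. i + 2 < length (drop k w) \<longrightarrow> drop k w ! i \<noteq> drop k w ! (i + 2)"
  proof (intro allI impI)
    fix i assume "i + 2 < length (drop k w)"
    then have "(k+i) + 2 < length w" by simp
    then have "w ! (k+i) \<noteq> w ! (k + i + 2)" using assms unfolding is_path_def by blast
    then show "drop k w ! i \<noteq> drop k w ! (i + 2)" using assms by (simp add: add.assoc)
  qed
  ultimately show ?thesis using assms unfolding is_path_def by auto
qed

lemma is_path_rev:
  assumes "is_path V adj w" "\<And>a b. adj a b \<Longrightarrow> adj b a"
  shows "is_path V adj (rev w)"
proof -
  let ?L = "length w"
  have "\<forall>i. Suc i < length (rev w) \<longrightarrow> adj (rev w ! i) (rev w ! Suc i)"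
  proof (intro allI impI)
    fix i assume h: "Suc i < length (rev w)"
    then have "Suc (?L - Suc (Suc i)) < ?L" by simp
    then have "adj (w ! (?L - Suc (Suc i))) (w ! Suc (?L - Suc (Suc i)))" using assms unfolding is_path_def by blast
    moreover have "Suc (?L - Suc (Suc i)) = ?L - Suc i" using h by simp
    ultimately show "adj (rev w ! i) (rev w ! Suc i)" using h assms(2) by (simp add: rev_nth)
  qed
  moreover have "\<forall>i. i + 2 < length (rev w) \<longrightarrow> rev w ! i \<noteq> rev w ! (i + 2)"
  proof (intro allI impI)
    fix i assume h: "i + 2 < length (rev w)"
    then have "(?L - Suc (i+2)) + 2 < ?L" by simp
    then have "w ! (?L - Suc (i+2)) \<noteq> w ! ((?L - Suc (i+2)) + 2)" using assms unfolding is_path_def by blast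
    moreover have "(?L - Suc (i+2)) + 2 = ?L - Suc i" using h by simp
    ultimately show "rev w ! i \<noteq> rev w ! (i + 2)" using h by (simp add: rev_nth)
  qed
  ultimately show ?thesis using assms unfolding is_path_def by auto
qed

lemma straight_take:
  assumes "straight opp w" shows "straight opp (take k w)"
  using assms unfolding straight_def by (auto simp: nth_take)

lemma straight_drop:
  assumes "straight opp w" shows "straight opp (drop k w)"
  unfolding straight_def
proof (intro allI impI)
  fix i assume h: "0 < i \<and> i + 1 < length (drop k w)"
  then have "0 < k+i \<and> (k+i) + 1 < length w" by auto
  then have "opp (w ! (k+i)) (w ! (k+i - 1)) (w ! (k+i + 1))" using assms unfolding straight_def by blast
  moreover have "k + i - 1 = k + (i - 1)" "k \<le> length w" using h by auto
  ultimately show "opp (drop k w ! i) (drop k w ! (i - 1)) (drop k w ! (i + 1))" using h by (simp add: add.assoc)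
qed

lemma straight_rev:
  assumes "straight opp w" "\<And>v a b. v \<in> set w \<Longrightarrow> opp v a b \<Longrightarrow> opp v b a"
  shows "straight opp (rev w)"
  unfolding straight_def
proof (intro allI impI)
  let ?L = "length w"
  fix i assume h: "0 < i \<and> i + 1 < length (rev w)"
  let ?j = "?L - Suc i"
  have "0 < ?j \<and> ?j + 1 < ?L" using h by auto
  then have "opp (w ! ?j) (w ! (?j - 1)) (w ! (?j + 1))" using assms unfolding straight_def by blast
  then have "opp (w ! ?j) (w ! (?j + 1)) (w ! (?j - 1))" using assms(2) h by auto
  moreover have "?j + 1 = ?L - Suc (i - 1)" "?j - 1 = ?L - Suc (i+1)" using h by auto
  ultimately show "opp (rev w ! i) (rev w ! (i - 1)) (rev w ! (i + 1))" using h by (simp add: rev_nth)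
qed




locale VN =
  fixes V :: "'a set" and adj :: "'a \<Rightarrow> 'a \<Rightarrow> bool" and opp :: "'a \<Rightarrow> 'a \<Rightarrow> 'a \<Rightarrow> bool" and n :: nat
  assumes VN: "veldkamp_ngon V adj opp n"
begin

lemma n2: "n \<ge> 2" using VN by (simp add: veldkamp_ngon_def)
lemma gr: "graph V adj" using VN by (simp add: veldkamp_ngon_def veldkamp_graph_def)
lemma adj_sym: "adj a b \<Longrightarrow> adj b a" using gr by (simp add: graph_def)
lemma adj_V: "adj a b \<Longrightarrow> a \<in> V \<and> b \<in> V" using gr by (simp add: graph_def)
lemma adj_neq: "adj a b \<Longrightarrow> a \<noteq> b" using gr by (simp add: graph_def)
lemma opp_sym: "v \<in> V \<Longrightarrow> opp v a b \<Longrightarrow> opp v b a"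
  using VN unfolding veldkamp_ngon_def veldkamp_graph_def opposition_rel_def by blast
lemma opp_irr: "v \<in> V \<Longrightarrow> \<not> opp v a a"
  using VN unfolding veldkamp_ngon_def veldkamp_graph_def opposition_rel_def by blast
lemma VP2: "1 \<le> k \<Longrightarrow> k \<le> n-1 \<Longrightarrow> s_path V adj k p \<Longrightarrow> straight opp p \<Longrightarrow> is_path V adj q
  \<Longrightarrow> straight opp q \<Longrightarrow> length q \<le> k+1 \<Longrightarrow> hd q = hd p \<Longrightarrow> last q = last p \<Longrightarrow> q = p"
  using VN unfolding veldkamp_ngon_def by blast
lemma bip: "\<exists>A. \<forall>x y. adj x y \<longrightarrow> (x \<in> A \<longleftrightarrow> y \<notin> A)"
  using VN unfolding veldkamp_ngon_def by blast
lemma VP3: "s_path V adj (n+1) p \<Longrightarrow> straight opp p \<Longrightarrow>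
   \<exists>c. closed_s_path V adj (2*n) c \<and> straight_circuit opp c \<and> lies_in p c"
  using VN unfolding veldkamp_ngon_def by blast

lemma parity:
  assumes "is_path V adj w" "\<forall>x y. adj x y \<longrightarrow> (x \<in> A \<longleftrightarrow> y \<notin> A)" "i < length w"
  shows "w ! i \<in> A \<longleftrightarrow> (w ! 0 \<in> A \<longleftrightarrow> even i)"
  using assms(3)
proof (induction i)
  case 0 then show ?case by simp
next
  case (Suc i)
  then have "adj (w ! i) (w ! Suc i)" using assms(1) unfolding is_path_def by blast
  then show ?case using Suc assms(2) by auto
qed

lemma no_short_closed:
  assumes "is_path V adj w" "straight opp w" "length w = m+1" "1 \<le> m" "m < 2*n" "w!0 = w!m"
  shows False
proof -
  obtain A where A: "\<forall>x y. adj x y \<longrightarrow> (x \<in> A \<longleftrightarrow> y \<notin> A)" using bip by blast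
  have "even m" using parity[OF assms(1) A, of m] assms by auto
  then obtain a where a: "m = 2*a" by auto
  have a1: "1 \<le> a" "a \<le> n-1" using a assms by auto
  let ?P = "take (a+1) w"
  have wne: "w \<noteq> []" using assms(3) by auto
  let ?Q = "rev (drop a w)"
  have wV: "set w \<subseteq> V" using assms(1) unfolding is_path_def by auto
  have P: "s_path V adj a ?P" using is_path_take[OF assms(1)] assms a unfolding s_path_def by auto
  have Ps: "straight opp ?P" using straight_take[OF assms(2)] .
  have Q: "is_path V adj ?Q" using is_path_rev[OF is_path_drop[OF assms(1)]] adj_sym assms a by auto
  have Qs: "straight opp ?Q"
    by (rule straight_rev[OF straight_drop[OF assms(2)]])
      (use wV opp_sym set_drop_subset[of a w] in blast)
  have lenQ: "length ?Q = a+1" using assms a by auto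
  have "hd ?Q = hd ?P"
  proof -
    have "hd ?Q = last w" using assms a by (simp add: hd_rev)
    also have "\<dots> = w ! m" using assms wne by (simp add: last_conv_nth)
    also have "\<dots> = hd ?P" using assms wne by (simp add: hd_conv_nth)
    finally show ?thesis .
  qed
  moreover have "last ?Q = last ?P"
  proof -
    have "last ?Q = w ! a" using assms a by (simp add: last_rev hd_drop_conv_nth)
    also have "\<dots> = last ?P" using assms a wne by (simp add: last_conv_nth min_def)
    finally show ?thesis .
  qed
  ultimately have eq: "?Q = ?P" using VP2[OF a1 P Ps Q Qs] lenQ by auto
  have "?P ! (a-1) = w ! (a-1)" using a1 by simp
  moreover have "?Q ! (a-1) = w ! (a+1)"
  proof -
    have "?Q ! (a-1) = drop a w ! (length (drop a w) - Suc (a-1))" using a1 assms a by (simp add: rev_nth)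
    also have "length (drop a w) - Suc (a-1) = 1" using a1 assms a by simp
    finally show ?thesis using assms a by simp
  qed
  ultimately have "w ! (a-1) = w ! ((a-1)+2)" using eq a1 by simp
  moreover have "(a-1) + 2 < length w" using a1 a assms by simp
  ultimately show False using assms(1) unfolding is_path_def by blast
qed

lemma straight_nbt:
  assumes "straight opp w" "set w \<subseteq> V" "i + 2 < length w"
  shows "w ! i \<noteq> w ! (i+2)"
proof
  assume e: "w ! i = w ! (i+2)"
  have "opp (w ! (i+1)) (w ! (i+1-1)) (w ! (i+1+1))" using assms unfolding straight_def by auto
  then have "opp (w ! (i+1)) (w ! i) (w ! i)" using e by (simp add: add.assoc)
  moreover have "w ! (i+1) \<in> V" using assms by auto
  ultimately show False using opp_irr by blast
qed

end


locale VNC = VN +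
  fixes c :: "'a list"
  assumes cl: "closed_s_path V adj (2*n) c" and sc: "straight_circuit opp c"
begin

definition N :: nat where "N = 2*n"
definition cyc :: "int \<Rightarrow> 'a" where "cyc i = c ! nat (i mod int N)"

lemma N4: "N \<ge> 4" using n2 by (simp add: N_def)
lemma lenc: "length c = N + 1" using cl by (simp add: closed_s_path_def s_path_def N_def)
lemma cpath: "is_path V adj c" using cl by (simp add: closed_s_path_def s_path_def)
lemma c0N: "c ! 0 = c ! N"
proof -
  have "c \<noteq> []" using lenc by auto
  then show ?thesis using cl lenc by (simp add: closed_s_path_def hd_conv_nth last_conv_nth)
qed
lemma cV: "set c \<subseteq> V" using cpath by (simp add: is_path_def)

lemma circ_adj_sym: "circ_adj c a b \<Longrightarrow> circ_adj c b a"
  unfolding circ_adj_def by (auto simp: insert_commute)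

lemma circ_adj_adj: "circ_adj c a b \<Longrightarrow> adj a b"
proof -
  assume "circ_adj c a b"
  then obtain i where i: "Suc i < length c" "{a,b} = {c!i, c!Suc i}" unfolding circ_adj_def by blast
  have "adj (c!i) (c!Suc i)" using cpath i unfolding is_path_def by blast
  then show ?thesis using i adj_sym by (auto simp: doubleton_eq_iff)
qed

lemma cpath_c: "is_path (set c) (circ_adj c) w \<Longrightarrow> is_path V adj w"
  using cV circ_adj_adj unfolding is_path_def by blast

lemma cstraight: "is_path (set c) (circ_adj c) w \<Longrightarrow> straight opp w"
  using sc unfolding straight_circuit_def by blast

lemma c_self: "is_path (set c) (circ_adj c) c"
  using cpath lenc unfolding is_path_def circ_adj_def by auto

lemma c_straight: "straight opp c" using cstraight c_self .

lemma c_distinct: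
  assumes "i < j" "j < N" shows "c ! i \<noteq> c ! j"
proof
  assume e: "c ! i = c ! j"
  let ?w = "take (j-i+1) (drop i c)"
  have "is_path V adj ?w" using is_path_take[OF is_path_drop[OF cpath]] assms lenc by auto
  moreover have "straight opp ?w" using straight_take[OF straight_drop[OF c_straight]] .
  moreover have "length ?w = (j-i)+1" using assms lenc by auto
  moreover have "?w ! 0 = ?w ! (j-i)" using assms lenc e by auto
  moreover have "1 \<le> j - i" "j - i < 2*n" using assms by (auto simp: N_def)
  ultimately show False using no_short_closed[of ?w "j-i"] by blast
qed

lemma cyc_set: "cyc i \<in> set c"
proof -
  have "i mod int N < int N" using N4 by simp
  then have "nat (i mod int N) < N" using N4 by (simp add: nat_less_iff)
  then have "nat (i mod int N) < length c" using lenc by simp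
  then show ?thesis unfolding cyc_def by simp
qed

lemma cyc_nat: "k \<le> N \<Longrightarrow> c ! k = cyc (int k)"
proof (cases "k = N")
  case True then show ?thesis using c0N by (simp add: cyc_def)
next
  case False
  assume "k \<le> N" then have "k < N" using False by simp
  then show ?thesis by (simp add: cyc_def)
qed

lemma cyc_eq: "cyc i = cyc j \<Longrightarrow> i mod int N = j mod int N"
proof (rule ccontr)
  assume e: "cyc i = cyc j" and ne: "i mod int N \<noteq> j mod int N"
  let ?a = "nat (i mod int N)" and ?b = "nat (j mod int N)"
  have lt: "?a < N" "?b < N" using N4 by (auto simp: nat_less_iff)
  have "i mod int N \<ge> 0" "j mod int N \<ge> 0" using N4 by auto
  then have "?a \<noteq> ?b" using ne by (simp add: nat_eq_iff2 del: nat_mod_as_int)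
  then have "c ! ?a \<noteq> c ! ?b" using c_distinct lt by (metis linorder_neqE_nat)
  then show False using e by (simp add: cyc_def)
qed

lemma cyc_mod: "i mod int N = j mod int N \<Longrightarrow> cyc i = cyc j" by (simp add: cyc_def)

lemma cyc_shift: "cyc (i + int N * t) = cyc i" by (simp add: cyc_def)

lemma cadj: "circ_adj c (cyc i) (cyc (i+1))"
proof -
  let ?k = "nat (i mod int N)"
  have k: "?k < N" using N4 by (simp add: nat_less_iff)
  have "c ! ?k = cyc i" by (simp add: cyc_def)
  moreover have "c ! Suc ?k = cyc (i+1)"
  proof -
    have "c ! Suc ?k = cyc (int (Suc ?k))" using k cyc_nat by simp
    also have "\<dots> = cyc (i+1)"
      using N4 by (intro cyc_mod) (simp, metis add.commute mod_add_left_eq)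
    finally show ?thesis .
  qed
  ultimately show ?thesis unfolding circ_adj_def using k lenc by (intro exI[of _ ?k]) simp
qed

lemma cadj': "circ_adj c (cyc (i+1)) (cyc i)" using cadj circ_adj_sym by blast

lemma nbr:
  assumes "circ_adj c (cyc s) b" shows "b = cyc (s+1) \<or> b = cyc (s-1)"
proof -
  obtain i where i: "Suc i < length c" "{cyc s, b} = {c!i, c!Suc i}" using assms unfolding circ_adj_def by blast
  have "c ! i = cyc (int i)" "c ! Suc i = cyc (int i + 1)" using i lenc cyc_nat[of i] cyc_nat[of "Suc i"] by (auto simp: add.commute)
  then have "(cyc s = cyc (int i) \<and> b = cyc (int i + 1)) \<or> (cyc s = cyc (int i + 1) \<and> b = cyc (int i))"
    using i by (auto simp: doubleton_eq_iff)
  then show ?thesis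
  proof
    assume h: "cyc s = cyc (int i) \<and> b = cyc (int i + 1)"
    then have "s mod int N = int i mod int N" using cyc_eq by blast
    then have "(s + 1) mod int N = (int i + 1) mod int N" by (rule mod_add_cong) simp
    then show ?thesis using h cyc_mod by metis
  next
    assume h: "cyc s = cyc (int i + 1) \<and> b = cyc (int i)"
    then have "s mod int N = (int i + 1) mod int N" using cyc_eq by blast
    then have "(s + (-1)) mod int N = (int i + 1 + (-1)) mod int N" by (rule mod_add_cong) simp
    then show ?thesis using h cyc_mod by (metis add_diff_cancel_right' diff_minus_eq_add minus_minus)
  qed
qed

lemma cyc_ne2: "d = 1 \<or> d = -1 \<Longrightarrow> cyc i \<noteq> cyc (i + 2*d)"
proof
  assume d: "d = 1 \<or> d = -1" and e: "cyc i = cyc (i + 2*d)"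
  then have "i mod int N = (i + 2*d) mod int N" using cyc_eq by blast
  then have "int N dvd 2*d" by (simp add: mod_eq_dvd_iff dvd_minus_iff)
  then have "int N dvd 2" using d by auto
  then have "int N \<le> 2" using zdvd_imp_le[of "int N" 2] by simp
  then show False using N4 by simp
qed

lemma follow:
  assumes w: "is_path (set c) (circ_adj c) w" and w0: "w ! 0 = cyc s" and w1: "w ! 1 = cyc (s+d)"
    and d: "d = 1 \<or> d = -1"
  shows "j < length w \<Longrightarrow> w ! j = cyc (s + d * int j)"
proof (induction j rule: less_induct)
  case (less j)
  show ?case
  proof (cases "j \<le> 1")
    case True
    then have "j = 0 \<or> j = 1" by auto
    then show ?thesis using w0 w1 by auto
  next
    case False
    define k where "k = j - 2"
    have k: "j = Suc (Suc k)" using False unfolding k_def by simp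
    have h1: "w ! Suc k = cyc (s + d * int (Suc k))" using less.IH[of "Suc k"] less.prems k by simp
    have h0: "w ! k = cyc (s + d * int k)" using less.IH[of k] less.prems k by simp
    have "circ_adj c (w ! Suc k) (w ! Suc (Suc k))" using w less.prems k unfolding is_path_def by blast
    then have "circ_adj c (cyc (s + d * int (Suc k))) (w ! j)" using h1 k by simp
    then have alt: "w ! j = cyc (s + d * int (Suc k) + 1) \<or> w ! j = cyc (s + d * int (Suc k) - 1)"
      by (rule nbr)
    have "k + 2 < length w" using less.prems k by simp
    then have ne: "w ! k \<noteq> w ! (k+2)" using w unfolding is_path_def by blast
    then have ne: "w ! k \<noteq> w ! j" using k by (simp add: numeral_2_eq_2)
    show ?thesis using d
    proof
      assume d1: "d = 1"
      have e1: "s + d * int (Suc k) - 1 = s + d * int k" "s + d * int (Suc k) + 1 = s + d * int j"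
        using d1 k by simp_all
      show ?thesis using alt ne h0 unfolding e1 by auto
    next
      assume d1: "d = -1"
      have e1: "s + d * int (Suc k) + 1 = s + d * int k" "s + d * int (Suc k) - 1 = s + d * int j"
        using d1 k by simp_all
      show ?thesis using alt ne h0 unfolding e1 by auto
    qed
  qed
qed

end


context VN begin

lemma main:
  assumes rx: "root V adj opp n x" and ry: "root V adj opp n y"
    and x0: "x ! 0 = y ! 0" and xn: "x ! n = y ! n" and o: "opp (x ! 0) (x ! 1) (y ! 1)"
  shows "opp (x ! n) (x ! (n - 1)) (y ! (n - 1))"
proof -
  have lx: "length x = n+1" and ly: "length y = n+1" using rx ry by (auto simp: root_def s_path_def)
  have xp: "is_path V adj x" and yp: "is_path V adj y" and xs: "straight opp x" and ys: "straight opp y"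
    using rx ry by (auto simp: root_def s_path_def)
  have xV: "set x \<subseteq> V" and yV: "set y \<subseteq> V" using xp yp by (auto simp: is_path_def)
  have nn: "n \<ge> 2" using n2 .
  define p where "p = rev x @ [y ! 1]"
  have lp: "length p = n + 2" using lx by (simp add: p_def)
  have pj: "j \<le> n \<Longrightarrow> p ! j = x ! (n - j)" for j
    using lx by (simp add: p_def nth_append rev_nth)
  have pn1: "p ! (n+1) = y ! 1" using lx by (simp add: p_def nth_append)
  have y1V: "y ! 1 \<in> V" using yV ly nn by auto
  have pV: "set p \<subseteq> V" using xV y1V by (auto simp: p_def)
  have ps: "straight opp p"
    unfolding straight_def
  proof (intro allI impI)
    fix j assume j: "0 < j \<and> j + 1 < length p"
    show "opp (p ! j) (p ! (j - 1)) (p ! (j + 1))"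
    proof (cases "j < n")
      case True
      have "0 < n - j \<and> (n - j) + 1 < length x" using True j lx by auto
      then have "opp (x ! (n-j)) (x ! (n-j-1)) (x ! (n-j+1))" using xs unfolding straight_def by blast
      moreover have "x ! (n-j) \<in> V" using xV lx True by auto
      ultimately have "opp (x ! (n-j)) (x ! (n-j+1)) (x ! (n-j-1))" using opp_sym by blast
      moreover have "p ! j = x ! (n-j)" "p ! (j-1) = x ! (n-j+1)" "p ! (j+1) = x ! (n-j-1)"
        using pj True j by (auto simp: Suc_diff_le)
      ultimately show ?thesis by simp
    next
      case False
      then have "j = n" using j lp by auto
      moreover have "p ! n = x ! 0" "p ! (n-1) = x ! 1" using pj[of n] pj[of "n-1"] nn by auto
      ultimately show ?thesis using o pn1 by simp
    qed
  qed
  have pp: "is_path V adj p"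
    unfolding is_path_def
  proof (intro conjI allI impI)
    show "p \<noteq> []" using lp by auto
    show "set p \<subseteq> V" using pV .
    fix i
    show "i + 2 < length p \<Longrightarrow> p ! i \<noteq> p ! (i + 2)" using straight_nbt[OF ps pV] by blast
    assume i: "Suc i < length p"
    show "adj (p ! i) (p ! Suc i)"
    proof (cases "i < n")
      case True
      have "Suc (n - Suc i) < length x" using True lx by auto
      then have "adj (x ! (n - Suc i)) (x ! Suc (n - Suc i))" using xp unfolding is_path_def by blast
      moreover have "Suc (n - Suc i) = n - i" using True by simp
      ultimately have "adj (x ! (n - i)) (x ! (n - Suc i))" using adj_sym by auto
      then show ?thesis using pj True by auto
    next
      case False
      then have "i = n" using i lp by auto
      moreover have "adj (y ! 0) (y ! Suc 0)" using yp ly nn unfolding is_path_def by auto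
      ultimately show ?thesis using pj pn1 x0 by simp
    qed
  qed
  obtain c where cl: "closed_s_path V adj (2*n) c" and sc: "straight_circuit opp c" and li: "lies_in p c"
    using VP3[of p] pp ps lp unfolding s_path_def by auto
  interpret C: VNC V adj opp n c by unfold_locales (use VN cl sc in auto)
  have pc: "is_path (set c) (circ_adj c) p"
    using li pp unfolding lies_in_def is_path_def by auto
  have "p ! 0 \<in> set c" using li lp unfolding lies_in_def by auto
  then obtain k where k: "k < length c" "p ! 0 = c ! k" by (auto simp: in_set_conv_nth)
  define s where "s = int k"
  have p0: "p ! 0 = C.cyc s" using k C.cyc_nat C.lenc unfolding s_def by auto
  have "circ_adj c (p ! 0) (p ! 1)" using pc lp unfolding is_path_def by auto
  then have "p ! 1 = C.cyc (s+1) \<or> p ! 1 = C.cyc (s-1)" using C.nbr p0 by simp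
  then obtain d where d: "d = 1 \<or> d = -1" and p1: "p ! 1 = C.cyc (s + d)"
    by (metis diff_conv_add_uminus)
  have pf: "j < n + 2 \<Longrightarrow> p ! j = C.cyc (s + d * int j)" for j
    using C.follow[OF pc p0 p1 d, of j] lp by simp
  have y1: "y ! 1 = C.cyc (s + d * int (n+1))" using pf[of "n+1"] pn1 by simp
  define r where "r = map (\<lambda>j. C.cyc (s - d * int j)) [0..<n]"
  have lr: "length r = n" by (simp add: r_def)
  have rne: "r \<noteq> []" using lr nn by auto
  have rj: "j < n \<Longrightarrow> r ! j = C.cyc (s - d * int j)" for j by (simp add: r_def)
  have rc: "is_path (set c) (circ_adj c) r"
    unfolding is_path_def
  proof (intro conjI allI impI)
    show "r \<noteq> []" using lr nn by auto
    show "set r \<subseteq> set c" using C.cyc_set by (auto simp: r_def)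
    fix i
    show "Suc i < length r \<Longrightarrow> circ_adj c (r ! i) (r ! Suc i)"
    proof -
      assume i: "Suc i < length r"
      have e: "r ! i = C.cyc (s - d * int i)" "r ! Suc i = C.cyc (s - d * int i - d)"
        using i lr rj by (auto simp: algebra_simps)
      show ?thesis using d
      proof
        assume "d = 1"
        then show ?thesis unfolding e using C.cadj'[of "s - int i - 1"] by simp
      next
        assume "d = -1"
        then show ?thesis unfolding e using C.cadj[of "s + int i"] by simp
      qed
    qed
    show "i + 2 < length r \<Longrightarrow> r ! i \<noteq> r ! (i + 2)"
    proof -
      assume i: "i + 2 < length r"
      have "r ! (i+2) = C.cyc (s - d * int i + 2 * (-d))" using i lr rj[of "i+2"] by (simp add: algebra_simps)
      moreover have "r ! i = C.cyc (s - d * int i)" using i lr rj by simp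
      moreover have "-d = 1 \<or> -d = -1" using d by auto
      ultimately show ?thesis using C.cyc_ne2[of "-d" "s - d * int i"] by simp
    qed
  qed
  have rs: "straight opp (rev r)"
    using straight_rev[OF C.cstraight[OF rc]] C.cV opp_sym rc unfolding is_path_def by blast
  have rp: "is_path V adj (rev r)" using is_path_rev[OF C.cpath_c[OF rc]] adj_sym by blast
  define Q where "Q = drop 1 y"
  have Qp: "s_path V adj (n-1) Q" using is_path_drop[OF yp] ly nn unfolding Q_def s_path_def by auto
  have Qs: "straight opp Q" using straight_drop[OF ys] unfolding Q_def .
  have "hd (rev r) = hd Q"
  proof -
    have "hd (rev r) = r ! (n-1)" using lr rne by (simp add: hd_rev last_conv_nth)
    also have "\<dots> = C.cyc (s - d * int (n-1))" using rj nn by simp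
    also have "\<dots> = C.cyc (s - d * int (n-1) + int C.N * d)" using C.cyc_shift by simp
    also have "s - d * int (n-1) + int C.N * d = s + d * int (n+1)" using nn by (simp add: C.N_def algebra_simps)
    also have "C.cyc \<dots> = hd Q" using y1 ly nn by (simp add: Q_def hd_drop_conv_nth)
    finally show ?thesis .
  qed
  moreover have "last (rev r) = last Q"
  proof -
    have "last (rev r) = r ! 0" using rne hd_conv_nth[of r] by (simp add: last_rev)
    also have "\<dots> = p ! 0" using rj nn p0 by simp
    also have "\<dots> = x ! n" using pj by simp
    also have "\<dots> = last Q" using xn ly nn by (simp add: Q_def last_conv_nth)
    finally show ?thesis .
  qed
  ultimately have "rev r = Q" using VP2[OF _ _ Qp Qs rp rs] nn lr by auto
  then have "rev r ! (n-2) = Q ! (n-2)" by simp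
  moreover have "rev r ! (n-2) = C.cyc (s - d)" using lr nn rj by (simp add: rev_nth)
  moreover have "Q ! (n-2) = y ! (n-1)" using ly nn by (simp add: Q_def Suc_diff_Suc numeral_2_eq_2)
  ultimately have yn1: "y ! (n-1) = C.cyc (s - d)" by simp
  have xn1: "x ! (n-1) = C.cyc (s + d)" using pj[of 1] p1 nn by simp
  have xnc: "x ! n = C.cyc s" using pj[of 0] p0 by simp
  define t where "t = [C.cyc (s+d), C.cyc s, C.cyc (s-d)]"
  have tc: "is_path (set c) (circ_adj c) t"
    unfolding is_path_def
  proof (intro conjI allI impI)
    show "t \<noteq> []" by (simp add: t_def)
    show "set t \<subseteq> set c" using C.cyc_set by (auto simp: t_def)
    fix i
    show "Suc i < length t \<Longrightarrow> circ_adj c (t ! i) (t ! Suc i)"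
    proof -
      assume i: "Suc i < length t"
      then have "i = 0 \<or> i = 1" by (auto simp: t_def)
      moreover have "circ_adj c (C.cyc (s+d)) (C.cyc s)" "circ_adj c (C.cyc s) (C.cyc (s-d))"
        using d C.cadj[of s] C.cadj'[of s] C.cadj[of "s-1"] C.cadj'[of "s-1"] by auto
      ultimately show ?thesis by (auto simp: t_def)
    qed
    show "i + 2 < length t \<Longrightarrow> t ! i \<noteq> t ! (i + 2)"
    proof -
      assume "i + 2 < length t"
      then have "i = 0" by (simp add: t_def)
      moreover have "-d = 1 \<or> -d = -1" using d by auto
      moreover have "s - d = (s + d) + 2 * (-d)" by simp
      ultimately show ?thesis using C.cyc_ne2[of "-d" "s+d"] by (simp add: t_def)
    qed
  qed
  have "straight opp t" using C.cstraight[OF tc] .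
  then have "opp (t ! 1) (t ! 0) (t ! 2)" unfolding straight_def by (auto simp: t_def)
  then show ?thesis using xn1 yn1 xnc by (simp add: t_def)
qed

end

lemma root_rev:
  assumes "veldkamp_ngon V adj opp n" "root V adj opp n x"
  shows "root V adj opp n (rev x)"
proof -
  interpret VN V adj opp n using assms(1) by unfold_locales
  have xp: "is_path V adj x" and xs: "straight opp x" and lx: "length x = n+1"
    using assms(2) by (auto simp: root_def s_path_def)
  have "is_path V adj (rev x)" using is_path_rev[OF xp] adj_sym by blast
  moreover have "straight opp (rev x)"
    using straight_rev[OF xs] opp_sym xp unfolding is_path_def by blast
  ultimately show ?thesis using lx by (simp add: root_def s_path_def)
qed

theorem proposition2p16:
  fixes V :: "'a set" and adj :: "'a \<Rightarrow> 'a \<Rightarrow> bool" and opp :: "'a \<Rightarrow> 'a \<Rightarrow> 'a \<Rightarrow> bool"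
    and n :: nat and x y :: "'a list"
  assumes "veldkamp_ngon V adj opp n"
    and "n \<ge> 2"
    and "root V adj opp n x" and "root V adj opp n y"
    and "x ! 0 = y ! 0" and "x ! n = y ! n"
  shows "opp (x ! 0) (x ! 1) (y ! 1) \<longleftrightarrow> opp (x ! n) (x ! (n - 1)) (y ! (n - 1))"
proof
  interpret VN V adj opp n using assms(1) by unfold_locales
  show "opp (x ! 0) (x ! 1) (y ! 1) \<Longrightarrow> opp (x ! n) (x ! (n - 1)) (y ! (n - 1))"
    using main assms by blast
next
  interpret VN V adj opp n using assms(1) by unfold_locales
  assume o: "opp (x ! n) (x ! (n - 1)) (y ! (n - 1))"
  have lx: "length x = n+1" and ly: "length y = n+1" using assms by (auto simp: root_def s_path_def)
  have rx: "root V adj opp n (rev x)" and ry: "root V adj opp n (rev y)"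
    using root_rev assms by blast+
  have e: "rev x ! 0 = x ! n" "rev y ! 0 = y ! n" "rev x ! n = x ! 0" "rev y ! n = y ! 0"
    "rev x ! 1 = x ! (n-1)" "rev y ! 1 = y ! (n-1)" "rev x ! (n-1) = x ! 1" "rev y ! (n-1) = y ! 1"
    using lx ly assms(2) by (auto simp: rev_nth Suc_diff_Suc numeral_2_eq_2)
  show "opp (x ! 0) (x ! 1) (y ! 1)"
    using main[OF rx ry] o assms(5,6) unfolding e by simp
qed

end
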